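(* Let $A$ be an alphabet of infinite cardinality $\kappa$ and let $S$ be the free semigroup over $A$. Then there exists a finite coloring of $S$ such that for no variable word $w(v)$ over $A$ is the set $\{w(a) : a \in A\}$ monochromatic.
   Context: The free semigroup $S$ over $A$ is the set of nonempty finite words over $A$ with concatenation. Given a symbol $v\notin A$, a variable word is a word over $A\cup\{v\}$ in which $v$ occurs; for $a\in A$, $w(a)$ is obtained by replacing every occurrence of $v$ in $w(v)$ by $a$. *)

theory Defs
  imports Main
begin

definition free_semigroup :: "'a set \<Rightarrow> 'a list set" where
  "free_semigroup A = {s. s \<noteq> [] \<and> set s \<subseteq> A}"

text \<open>Variable words over A: words over A \<union> {v}, where the variable v is encoded as None
  and a letter a of A as Some a; v must occur.\<close>
definition variable_word :: "'a set \<Rightarrow> 'a option list \<Rightarrow> bool" where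
  "variable_word A w \<longleftrightarrow> None \<in> set w \<and> (\<forall>x\<in>set w. x = None \<or> the x \<in> A)"

definition subst_var :: "'a option list \<Rightarrow> 'a \<Rightarrow> 'a list" where
  "subst_var w a = map (\<lambda>x. case x of None \<Rightarrow> a | Some b \<Rightarrow> b) w"

end

theory Submission
  imports Defs
begin

lemma set_subst: "x \<in> set (subst_var w a) \<longleftrightarrow> (None \<in> set w \<and> x = a) \<or> Some x \<in> set w"
  unfolding subst_var_def by (force split: option.splits)

theorem theorem2p10:
  fixes A :: "'a set"
  assumes "infinite A"
  shows "\<exists>(k::nat) (c :: 'a list \<Rightarrow> nat).
           (\<forall>s\<in>free_semigroup A. c s < k) \<and>
           (\<forall>w. variable_word A w \<longrightarrow>
                \<not> (\<exists>col. \<forall>a\<in>A. c (subst_var w a) = col))"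
proof -
  obtain g :: "nat \<Rightarrow> 'a" where g: "inj g" "range g \<subseteq> A"
    using infinite_countable_subset[OF assms] by blast
  define c where "c s = Max {n. g n \<in> set s} mod 2" for s :: "'a list"
  have main: False if vw: "variable_word A w" and col: "\<forall>a\<in>A. c (subst_var w a) = cl" for w cl
  proof -
    have N: "None \<in> set w" using vw unfolding variable_word_def by auto
    define F where "F = (Some \<circ> g) -` set w"
    have fF: "finite F" unfolding F_def
      by (rule finite_vimageI) (use g(1) in \<open>auto simp: inj_def\<close>)
    then obtain m where m: "\<forall>n\<in>F. n < m" using finite_nat_set_iff_bounded by blast
    have key: "c (subst_var w (g n)) = n mod 2" if "n \<ge> m" for n
    proof -
      have "{k. g k \<in> set (subst_var w (g n))} = insert n F"
        using N g(1) by (auto simp: set_subst F_def inj_def)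
      moreover have "Max (insert n F) = n"
        by (rule Max_eqI) (use fF m that in auto)
      ultimately show ?thesis unfolding c_def by simp
    qed
    have "g m \<in> A" "g (Suc m) \<in> A" using g(2) by auto
    with col have "c (subst_var w (g m)) = c (subst_var w (g (Suc m)))" by auto
    with key[of m] key[of "Suc m"] show False by presburger
  qed
  show ?thesis
    by (rule exI[of _ 2], rule exI[of _ c]) (auto simp: c_def dest: main)
qed

end
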